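(* Let $f: (\mathbb{R}^{+})^n \to (\mathbb{R}^{+})^n$ be homogeneous and monotone, and suppose its recession function $\hat f$ exists. Suppose the only eigenvectors of $\hat f$ in $(\mathbb{R}^{+})^n$ are the positive scalar multiples of $(1,\dots,1)$. Then for all $\lambda,\mu \in \mathbb{R}^{+}$ the slice space $S^\lambda_\mu(f) = \{x \in (\mathbb{R}^{+})^n : \mu x \le f(x) \le \lambda x\}$ is bounded in the Hilbert projective metric.
   Context: Homogeneous: $f(\lambda x) = \lambda f(x)$ for $\lambda>0$; monotone: $x\le y$ componentwise implies $f(x)\le f(y)$. The recession function exists if for each $x \in (\mathbb{R}^{+})^n$ the limit $\hat f(x) = \lim_{k\to\infty} f(x_1^k,\dots,x_n^k)^{1/k}$ (the $k$-th root taken componentwise) exists in $(\mathbb{R}^{+})^n$. An eigenvector of a map $g$ is $x$ with $g(x) = \lambda x$ for some $\lambda>0$. Hilbert projective metric: $d_H(y,z) = \max_i \log(y_i/z_i) - \min_i \log(y_i/z_i)$; $A$ is bounded if $\sup_{y,z\in A} d_H(y,z)<\infty$. *)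

theory Defs
  imports "HOL-Analysis.Analysis"
begin

definition pos_cone :: "(real ^ 'n) set" where
  "pos_cone = {x. \<forall>i. 0 < x $ i}"

definition homogeneous_on_cone :: "(real ^ 'n \<Rightarrow> real ^ 'n) \<Rightarrow> bool" where
  "homogeneous_on_cone f \<longleftrightarrow>
     (\<forall>x \<in> pos_cone. \<forall>c::real. 0 < c \<longrightarrow> f (c *\<^sub>R x) = c *\<^sub>R f x)"

definition monotone_on_cone :: "(real ^ 'n \<Rightarrow> real ^ 'n) \<Rightarrow> bool" where
  "monotone_on_cone f \<longleftrightarrow>
     (\<forall>x \<in> pos_cone. \<forall>y \<in> pos_cone. (\<forall>i. x $ i \<le> y $ i) \<longrightarrow> (\<forall>i. f x $ i \<le> f y $ i))"

definition is_recession_function ::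
  "(real ^ 'n \<Rightarrow> real ^ 'n) \<Rightarrow> (real ^ 'n \<Rightarrow> real ^ 'n) \<Rightarrow> bool" where
  "is_recession_function f g \<longleftrightarrow>
     (\<forall>x \<in> pos_cone.
        g x \<in> pos_cone \<and>
        (\<lambda>k::nat. \<chi> i. (f (\<chi> j. x $ j ^ k) $ i) powr (1 / real k)) \<longlonglongrightarrow> g x)"

definition eigenvector_on_cone :: "(real ^ 'n \<Rightarrow> real ^ 'n) \<Rightarrow> real ^ 'n \<Rightarrow> bool" where
  "eigenvector_on_cone g x \<longleftrightarrow> x \<in> pos_cone \<and> (\<exists>l::real. 0 < l \<and> g x = l *\<^sub>R x)"

definition hilbert_dist :: "real ^ 'n \<Rightarrow> real ^ 'n \<Rightarrow> real" where
  "hilbert_dist y z = Max (range (\<lambda>i. ln (y $ i / z $ i))) - Min (range (\<lambda>i. ln (y $ i / z $ i)))"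

definition hilbert_bounded :: "(real ^ 'n) set \<Rightarrow> bool" where
  "hilbert_bounded A \<longleftrightarrow> (\<exists>B. \<forall>y \<in> A. \<forall>z \<in> A. hilbert_dist y z \<le> B)"

definition slice_space :: "real \<Rightarrow> real \<Rightarrow> (real ^ 'n \<Rightarrow> real ^ 'n) \<Rightarrow> (real ^ 'n) set" where
  "slice_space l m f = {x \<in> pos_cone. \<forall>i. m * x $ i \<le> f x $ i \<and> f x $ i \<le> l * x $ i}"

end

theory Submission
  imports Defs
begin

definition vexp :: "real ^ 'n \<Rightarrow> real ^ 'n" where "vexp X = (\<chi> i. exp (X $ i))"
definition vln :: "real ^ 'n \<Rightarrow> real ^ 'n" where "vln x = (\<chi> i. ln (x $ i))"
definition Fl :: "(real ^ 'n \<Rightarrow> real ^ 'n) \<Rightarrow> real ^ 'n \<Rightarrow> real ^ 'n" where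
  "Fl f X = vln (f (vexp X))"

lemma vexp_pos: "vexp X \<in> pos_cone"
  by (simp add: vexp_def pos_cone_def)

lemma vexp_vln: "x \<in> pos_cone \<Longrightarrow> vexp (vln x) = x"
  by (simp add: vexp_def vln_def pos_cone_def vec_eq_iff)

lemma nonexp:
  assumes fpos: "\<forall>x \<in> pos_cone. f x \<in> pos_cone"
    and hom: "homogeneous_on_cone f" and mon: "monotone_on_cone f"
    and le: "\<forall>j. X $ j \<le> Y $ j + c"
  shows "Fl f X $ i \<le> Fl f Y $ i + c"
proof -
  have ypos: "exp c *\<^sub>R vexp Y \<in> pos_cone" using vexp_pos[of Y] by (simp add: pos_cone_def)
  have "\<forall>j. vexp X $ j \<le> (exp c *\<^sub>R vexp Y) $ j"
  proof
    fix j
    have "exp (X $ j) \<le> exp (Y $ j + c)" using le by simp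
    then show "vexp X $ j \<le> (exp c *\<^sub>R vexp Y) $ j" by (simp add: vexp_def exp_add mult.commute)
  qed
  then have "f (vexp X) $ i \<le> f (exp c *\<^sub>R vexp Y) $ i"
    using mon vexp_pos ypos unfolding monotone_on_cone_def by blast
  also have "\<dots> = exp c * f (vexp Y) $ i"
  proof -
    have "f (exp c *\<^sub>R vexp Y) = exp c *\<^sub>R f (vexp Y)"
      using hom vexp_pos[of Y] exp_gt_zero[of c] unfolding homogeneous_on_cone_def by blast
    then show ?thesis by simp
  qed
  finally have h: "f (vexp X) $ i \<le> exp c * f (vexp Y) $ i" .
  have p1: "f (vexp X) $ i > 0" using fpos vexp_pos unfolding pos_cone_def by blast
  have p2: "f (vexp Y) $ i > 0" using fpos vexp_pos unfolding pos_cone_def by blast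
  have "ln (f (vexp X) $ i) \<le> ln (exp c * f (vexp Y) $ i)" using h p1 p2 by simp
  also have "\<dots> = c + ln (f (vexp Y) $ i)" using p2 by (simp add: ln_mult)
  finally show ?thesis by (simp add: Fl_def vln_def)
qed

lemma nonexp_abs:
  assumes fpos: "\<forall>x \<in> pos_cone. f x \<in> pos_cone"
    and hom: "homogeneous_on_cone f" and mon: "monotone_on_cone f"
    and le: "\<forall>j. \<bar>X $ j - Y $ j\<bar> \<le> c"
  shows "\<bar>Fl f X $ i - Fl f Y $ i\<bar> \<le> c"
proof -
  have "Fl f X $ i \<le> Fl f Y $ i + c" using nonexp[OF fpos hom mon] le by (smt (verit))
  moreover have "Fl f Y $ i \<le> Fl f X $ i + c" using nonexp[OF fpos hom mon] le by (smt (verit))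
  ultimately show ?thesis by linarith
qed

lemma slice_log:
  assumes "x \<in> slice_space l m f" and "0 < l" "0 < m"
  shows "ln m \<le> Fl f (vln x) $ i - vln x $ i \<and> Fl f (vln x) $ i - vln x $ i \<le> ln l"
proof -
  have xp: "x \<in> pos_cone" and b: "m * x $ i \<le> f x $ i" "f x $ i \<le> l * x $ i"
    using assms(1) unfolding slice_space_def by auto
  have xi: "x $ i > 0" using xp unfolding pos_cone_def by auto
  have fi: "f x $ i > 0" using b xi assms by (smt (verit) mult_pos_pos)
  have "ln (m * x $ i) \<le> ln (f x $ i)" using b xi fi assms by simp
  moreover have "ln (f x $ i) \<le> ln (l * x $ i)" using b xi fi assms by simp
  moreover have "Fl f (vln x) $ i = ln (f x $ i)" by (simp only: Fl_def vexp_vln[OF xp]) (simp add: vln_def)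
  ultimately show ?thesis using xi assms
    by (simp add: vln_def ln_mult)
qed

lemma recession_log:
  assumes fpos: "\<forall>x \<in> pos_cone. f x \<in> pos_cone"
    and rec: "is_recession_function f g"
  shows "(\<lambda>k. Fl f (real k *\<^sub>R Z) $ i / real k) \<longlonglongrightarrow> ln (g (vexp Z) $ i)"
proof -
  have gp: "g (vexp Z) \<in> pos_cone" and
    lim: "(\<lambda>k::nat. \<chi> i. (f (\<chi> j. vexp Z $ j ^ k) $ i) powr (1 / real k)) \<longlonglongrightarrow> g (vexp Z)"
    using rec vexp_pos unfolding is_recession_function_def by blast+
  have lim_i: "(\<lambda>k::nat. (f (\<chi> j. vexp Z $ j ^ k) $ i) powr (1 / real k)) \<longlonglongrightarrow> g (vexp Z) $ i"
    using tendsto_vec_nth[OF lim, of i] by simp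
  have eq: "(\<chi> j. vexp Z $ j ^ k) = vexp (real k *\<^sub>R Z)" for k
    by (simp add: vexp_def vec_eq_iff exp_of_nat_mult[symmetric])
  have eq2: "ln ((f (\<chi> j. vexp Z $ j ^ k) $ i) powr (1 / real k)) = Fl f (real k *\<^sub>R Z) $ i / real k" for k
  proof -
    have "f (vexp (real k *\<^sub>R Z)) $ i > 0" using fpos vexp_pos unfolding pos_cone_def by blast
    then show ?thesis unfolding eq by (simp add: Fl_def vln_def ln_powr)
  qed
  have gi: "g (vexp Z) $ i > 0" using gp unfolding pos_cone_def by auto
  show ?thesis using tendsto_ln[OF lim_i] gi unfolding eq2 by simp
qed


theorem theorem7:
  fixes f g :: "real ^ 'n \<Rightarrow> real ^ 'n"
  assumes "\<forall>x \<in> pos_cone. f x \<in> pos_cone"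
    and "homogeneous_on_cone f"
    and "monotone_on_cone f"
    and "is_recession_function f g"
    and "\<forall>x. eigenvector_on_cone g x \<longrightarrow> (\<exists>c::real. 0 < c \<and> x = c *\<^sub>R (\<chi> i. 1))"
    and "0 < l" and "0 < m"
  shows "hilbert_bounded (slice_space l m f)"
proof -
  note fpos = assms(1) and hom = assms(2) and mon = assms(3) and rec = assms(4) and eig = assms(5)
  define S where "S = slice_space l m f"
  define A where "A = \<bar>ln l\<bar> + \<bar>ln m\<bar>"
  have key: "\<exists>B. \<forall>x\<in>S. \<forall>i j. vln x $ i - vln x $ j \<le> B"
  proof (rule ccontr)
    assume na: "\<not> ?thesis"
    have "\<forall>k::nat. \<exists>x\<in>S. \<exists>i j. vln x $ i - vln x $ j > real k + 1"
    proof
      fix k :: nat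
      show "\<exists>x\<in>S. \<exists>i j. vln x $ i - vln x $ j > real k + 1"
        using na by (meson not_le)
    qed
    then obtain xs where xs: "\<And>k. xs k \<in> S"
      and gap: "\<And>k. \<exists>i j. vln (xs k) $ i - vln (xs k) $ j > real k + 1"
      by metis
    define X where "X k = vln (xs k)" for k
    define M where "M k = Max (range (\<lambda>i. X k $ i))" for k
    define N where "N k = Min (range (\<lambda>i. X k $ i))" for k
    define D where "D k = M k - N k" for k
    define s where "s k = nat \<lceil>D k\<rceil>" for k
    define Y where "Y k = (\<chi> i. X k $ i - M k)" for k
    define Z where "Z k = (1 / real (s k)) *\<^sub>R Y k" for k
    have Mge: "X k $ i \<le> M k" for k i unfolding M_def by (rule Max_ge) auto
    have Nle: "N k \<le> X k $ i" for k i unfolding N_def by (rule Min_le) auto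
    have Min: "\<exists>i. X k $ i = M k" for k
    proof -
      have "M k \<in> range (\<lambda>i. X k $ i)" unfolding M_def by (rule Max_in) auto
      then show ?thesis by auto
    qed
    have Nin: "\<exists>i. X k $ i = N k" for k
    proof -
      have "N k \<in> range (\<lambda>i. X k $ i)" unfolding N_def by (rule Min_in) auto
      then show ?thesis by auto
    qed
    have Dgt: "D k > real k + 1" for k
    proof -
      obtain i j where "X k $ i - X k $ j > real k + 1" using gap[of k] unfolding X_def by blast
      then show ?thesis using Mge[of k i] Nle[of k j] unfolding D_def by linarith
    qed
    have sD: "real (s k) \<ge> D k" "real (s k) < D k + 1" "real (s k) > 0" for k
    proof -
      have "D k > 0" using Dgt[of k] by linarith
      then have "real (s k) = of_int \<lceil>D k\<rceil>" unfolding s_def by simp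
      then show "real (s k) \<ge> D k" "real (s k) < D k + 1" "real (s k) > 0"
        using \<open>D k > 0\<close> by linarith+
    qed
    have Zc: "Z k $ i = (X k $ i - M k) / real (s k)" for k i
      unfolding Z_def Y_def by simp
    have Zbox: "-1 \<le> Z k $ i \<and> Z k $ i \<le> 0" for k i
    proof -
      have a: "X k $ i - M k \<le> 0" using Mge[of k i] by simp
      have b: "-(real (s k)) \<le> X k $ i - M k" using Nle[of k i] sD(1)[of k] unfolding D_def by linarith
      show ?thesis unfolding Zc using a b sD(3)[of k]
        by (simp add: divide_le_0_iff le_divide_eq)
    qed
    have Zgap: "\<exists>i j. Z k $ i - Z k $ j \<ge> 1/2" for k
    proof -
      obtain i where i: "X k $ i = M k" using Min by blast
      obtain j where j: "X k $ j = N k" using Nin by blast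
      have "Z k $ i - Z k $ j = D k / real (s k)"
        unfolding Zc i j D_def by (simp add: diff_divide_distrib)
      also have "\<dots> \<ge> 1/2"
        using sD(2)[of k] sD(3)[of k] Dgt[of k] by (simp add: le_divide_eq)
      finally show ?thesis by blast
    qed
    have Yslice: "\<bar>Fl f (Y k) $ i - Y k $ i\<bar> \<le> A" for k i
    proof -
      have sl: "ln m \<le> Fl f (X k) $ i - X k $ i \<and> Fl f (X k) $ i - X k $ i \<le> ln l"
        using slice_log[OF xs[of k, unfolded S_def] assms(6,7)] unfolding X_def by blast
      have u: "Fl f (Y k) $ i \<le> Fl f (X k) $ i + (- M k)"
        by (rule nonexp[OF fpos hom mon]) (simp add: Y_def)
      have v: "Fl f (X k) $ i \<le> Fl f (Y k) $ i + M k"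
        by (rule nonexp[OF fpos hom mon]) (simp add: Y_def)
      have "Y k $ i = X k $ i - M k" by (simp add: Y_def)
      then show ?thesis using sl u v unfolding A_def by linarith
    qed
    have Zin: "\<forall>k. Z k \<in> cbox (\<chi> i. -1) 0"
      using Zbox by (simp add: mem_box_cart)
    obtain Zl r where r: "strict_mono r" and Zlim: "(Z \<circ> r) \<longlonglongrightarrow> Zl"
      using seq_compactE[OF compact_imp_seq_compact[OF compact_cbox] Zin] by metis
    define t where "t k = s (r k)" for k
    have tge: "real k \<le> real (t k)" for k
    proof -
      have "k \<le> r k" using seq_suble[OF r] by simp
      then show ?thesis using sD(1)[of "r k"] Dgt[of "r k"] unfolding t_def by linarith
    qed
    have tpos: "real (t k) > 0" for k unfolding t_def using sD(3) by simp
    have tlim: "filterlim t at_top sequentially"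
      by (rule filterlim_at_top_mono[OF filterlim_ident]) (use tge in auto)
    have rtlim: "filterlim (\<lambda>k. real (t k)) at_top sequentially"
      using filterlim_compose[OF filterlim_real_sequentially tlim] .
    have Yeq: "Y (r k) = real (t k) *\<^sub>R Z (r k)" for k
      unfolding Z_def t_def using sD(3)[of "r k"] by simp
    have nlim: "(\<lambda>k. norm (Z (r k) - Zl)) \<longlonglongrightarrow> 0"
      using tendsto_norm_zero[OF LIM_zero[OF Zlim]] by (simp add: comp_def)
    have eqi: "ln (g (vexp Zl) $ i) = Zl $ i" for i
    proof -
      have lim1: "(\<lambda>k. Fl f (real (t k) *\<^sub>R Zl) $ i / real (t k)) \<longlonglongrightarrow> ln (g (vexp Zl) $ i)"
        using filterlim_compose[OF recession_log[OF fpos rec, of Zl i] tlim] .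
      have bnd: "\<bar>Fl f (real (t k) *\<^sub>R Zl) $ i / real (t k) - Zl $ i\<bar>
           \<le> A / real (t k) + 2 * norm (Z (r k) - Zl)" for k
      proof -
        let ?T = "real (t k)" and ?e = "norm (Z (r k) - Zl)"
        have cj: "\<bar>(?T *\<^sub>R Zl) $ j - Y (r k) $ j\<bar> \<le> ?T * ?e" for j
        proof -
          have "\<bar>(?T *\<^sub>R Zl) $ j - Y (r k) $ j\<bar> = ?T * \<bar>(Z (r k) - Zl) $ j\<bar>"
            unfolding Yeq using tpos[of k] by (simp add: abs_mult right_diff_distrib[symmetric] abs_minus_commute)
          also have "\<dots> \<le> ?T * ?e"
            using tpos[of k] component_le_norm_cart[of "Z (r k) - Zl" j] by (simp add: mult_left_mono)
          finally show ?thesis .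
        qed
        have h1: "\<bar>Fl f (?T *\<^sub>R Zl) $ i - Fl f (Y (r k)) $ i\<bar> \<le> ?T * ?e"
          by (rule nonexp_abs[OF fpos hom mon]) (use cj in blast)
        have h2: "\<bar>Fl f (?T *\<^sub>R Zl) $ i - ?T * Zl $ i\<bar> \<le> A + 2 * (?T * ?e)"
          using h1 cj[of i] Yslice[of "r k" i] by simp
        have "\<bar>Fl f (?T *\<^sub>R Zl) $ i / ?T - Zl $ i\<bar> = \<bar>Fl f (?T *\<^sub>R Zl) $ i - ?T * Zl $ i\<bar> / ?T"
          using tpos[of k] by (simp add: field_simps)
        also have "\<dots> \<le> (A + 2 * (?T * ?e)) / ?T"
          using h2 tpos[of k] by (simp add: divide_right_mono)
        also have "\<dots> = A / ?T + 2 * ?e" using tpos[of k] by (simp add: field_simps)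
        finally show ?thesis .
      qed
      have glim: "(\<lambda>k. A / real (t k) + 2 * norm (Z (r k) - Zl)) \<longlonglongrightarrow> 0"
      proof -
        have "(\<lambda>k. A / real (t k)) \<longlonglongrightarrow> 0"
          by (rule tendsto_divide_0[OF tendsto_const filterlim_at_top_imp_at_infinity[OF rtlim]])
        from tendsto_add[OF this tendsto_mult[OF tendsto_const nlim, of 2]] show ?thesis by simp
      qed
      have "(\<lambda>k. Fl f (real (t k) *\<^sub>R Zl) $ i / real (t k) - Zl $ i) \<longlonglongrightarrow> 0"
        by (rule Lim_null_comparison[OF _ glim]) (use bnd in simp)
      then have lim2: "(\<lambda>k. Fl f (real (t k) *\<^sub>R Zl) $ i / real (t k)) \<longlonglongrightarrow> Zl $ i"
        by (rule LIM_zero_cancel)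
      show ?thesis using LIMSEQ_unique[OF lim1 lim2] .
    qed
    have gp: "g (vexp Zl) \<in> pos_cone"
      using rec vexp_pos unfolding is_recession_function_def by blast
    have gfix: "g (vexp Zl) = 1 *\<^sub>R vexp Zl"
    proof -
      have "g (vexp Zl) $ i = vexp Zl $ i" for i
      proof -
        have "g (vexp Zl) $ i > 0" using gp unfolding pos_cone_def by auto
        then have "g (vexp Zl) $ i = exp (ln (g (vexp Zl) $ i))" by simp
        then show ?thesis using eqi[of i] by (simp add: vexp_def)
      qed
      then show ?thesis by (simp add: vec_eq_iff)
    qed
    have "eigenvector_on_cone g (vexp Zl)"
      unfolding eigenvector_on_cone_def using vexp_pos gfix by (metis zero_less_one)
    then obtain c where cc: "vexp Zl = c *\<^sub>R (\<chi> i. 1)" using eig by blast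
    have Zconst: "Zl $ i = Zl $ j" for i j
    proof -
      have "exp (Zl $ i) = c" "exp (Zl $ j) = c"
        using cc unfolding vexp_def vec_eq_iff by (auto dest: spec[of _ i] spec[of _ j])
      then show ?thesis by (metis exp_inj_iff)
    qed
    obtain K where K: "\<And>k. k \<ge> K \<Longrightarrow> norm (Z (r k) - Zl) < 1/8"
      using nlim unfolding LIMSEQ_def by (metis dist_real_def diff_zero norm_ge_zero abs_of_nonneg real_norm_def zero_less_divide_iff zero_less_numeral zero_less_one)
    obtain i j where ij: "Z (r K) $ i - Z (r K) $ j \<ge> 1/2" using Zgap by blast
    have "\<bar>(Z (r K) - Zl) $ i\<bar> < 1/8" "\<bar>(Z (r K) - Zl) $ j\<bar> < 1/8"
      using K[of K] component_le_norm_cart le_less_trans by blast+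
    then show False using ij Zconst[of i j] unfolding abs_less_iff by simp
  qed
  then obtain B where B: "\<And>x i j. x \<in> S \<Longrightarrow> vln x $ i - vln x $ j \<le> B" by blast
  show ?thesis
    unfolding hilbert_bounded_def
  proof (intro exI ballI)
    fix y z assume y: "y \<in> slice_space l m f" and z: "z \<in> slice_space l m f"
    have yp: "y $ i > 0" and zp: "z $ i > 0" for i
      using y z unfolding slice_space_def pos_cone_def by auto
    let ?h = "\<lambda>i. ln (y $ i / z $ i)"
    have h: "?h i = vln y $ i - vln z $ i" for i
      using yp[of i] zp[of i] by (simp add: vln_def ln_div)
    have "Max (range ?h) \<in> range ?h" by (rule Max_in) auto
    then obtain i where i: "Max (range ?h) = ?h i" by (elim rangeE) blast
    have "Min (range ?h) \<in> range ?h" by (rule Min_in) auto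
    then obtain j where j: "Min (range ?h) = ?h j" by (elim rangeE) blast
    have "hilbert_dist y z = ?h i - ?h j" unfolding hilbert_dist_def i j ..
    also have "\<dots> \<le> 2 * B"
      using B[of y i j] B[of z j i] y z unfolding h S_def by simp
    finally show "hilbert_dist y z \<le> 2 * B" .
  qed
qed

end
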